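(* Let $x_1 \in X$ and stepsizes $\gamma_k > 0$ be given, and for $k \ge 1$ let \[ y_k = P_{x_k}(\gamma_k F(x_k)), \qquad x_{k+1} = P_{x_k}(\gamma_k F(y_k)). \] Then: (a) There exists $x^* \in X^*$ such that \[ -\frac{\gamma_k^2}{2\alpha}\|F(x_k) - F(y_k)\|_*^2 + V(x_k, y_k) \le V(x_k, x^* ) - V(x_{k+1}, x^* ). \] (b) If $F$ is Hölder continuous, i.e. $\|F(x) - F(y)\|_* \le L\|x-y\|^\nu$ for all $x, y\in X$ for some $L>0$ and $\nu \in (0,1]$, then there exists $x^* \in X^*$ such that \[ V(x_k,y_k) - 2^{\nu-1}L^2\gamma_k^2\alpha^{-(1+\nu)}\left[V(x_k,y_k)\right]^\nu \le V(x_k,x^* ) - V(x_{k+1},x^* ). \] In particular, if $F$ is Lipschitz continuous ($\nu = 1$), then \[ \left(1 - L^2\gamma_k^2\alpha^{-2}\right)V(x_k,y_k) \le V(x_k,x^* ) - V(x_{k+1},x^* ). \]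
   Context: $\mathbb{R}^n$ carries an inner product $\langle\cdot,\cdot\rangle$ and a norm $\|\cdot\|$ (not necessarily induced by the inner product), with dual norm $\|\cdot\|_*$. $X \subseteq \mathbb{R}^n$ is a nonempty closed convex set and $F: X \to \mathbb{R}^n$ is continuous. $X^*$ is the set of strong solutions of $\mathrm{VI}(X,F)$ (points $x^*\in X$ with $\langle F(x^* ), x - x^*\rangle \ge 0$ for all $x\in X$); it is assumed nonempty, and it is assumed (generalized monotonicity) that for every $x^* \in X^*$, $\langle F(x), x - x^*\rangle \ge 0$ for all $x \in X$. A distance generating function with modulus $\alpha>0$ w.r.t. $\|\cdot\|$ is a function $\omega: X \to \mathbb{R}$ that is convex and continuous on $X$, such that $X^o = \{x \in X : \partial\omega(x) \neq \emptyset\}$ is convex, and such that $\omega$ restricted to $X^o$ is continuously differentiable and satisfies $\langle \nabla\omega(x') - \nabla\omega(x), x' - x\rangle \ge \alpha\|x'-x\|^2$ for all $x, x' \in X^o$. Fix such an $\omega$. $V(x,z) = \omega(z) - \omega(x) - \langle \nabla\omega(x), z - x\rangle$ and $P_x(\phi) = \arg\min_{z \in X}\{\langle \phi, z\rangle + V(x,z)\}$. *)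

theory Defs
  imports "HOL-Analysis.Analysis"
begin

definition is_norm :: "('a::euclidean_space \<Rightarrow> real) \<Rightarrow> bool" where
  "is_norm N \<longleftrightarrow> (\<forall>x. 0 \<le> N x) \<and> (\<forall>x. N x = 0 \<longleftrightarrow> x = 0)
     \<and> (\<forall>c x. N (c *\<^sub>R x) = \<bar>c\<bar> * N x) \<and> (\<forall>x y. N (x + y) \<le> N x + N y)"

definition dual_norm :: "('a::euclidean_space \<Rightarrow> real) \<Rightarrow> 'a \<Rightarrow> real" where
  "dual_norm N \<phi> = Sup {\<phi> \<bullet> x | x. N x \<le> 1}"

definition subdiff :: "'a::euclidean_space set \<Rightarrow> ('a \<Rightarrow> real) \<Rightarrow> 'a \<Rightarrow> 'a set" where
  "subdiff X \<omega> x = {g. \<forall>z\<in>X. \<omega> x + g \<bullet> (z - x) \<le> \<omega> z}"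

definition dgf_dom :: "'a::euclidean_space set \<Rightarrow> ('a \<Rightarrow> real) \<Rightarrow> 'a set" where
  "dgf_dom X \<omega> = {x\<in>X. subdiff X \<omega> x \<noteq> {}}"

definition is_dgf :: "'a::euclidean_space set \<Rightarrow> ('a \<Rightarrow> real) \<Rightarrow> ('a \<Rightarrow> real) \<Rightarrow> ('a \<Rightarrow> 'a) \<Rightarrow> real \<Rightarrow> bool" where
  "is_dgf X N \<omega> gw \<alpha> \<longleftrightarrow> 0 < \<alpha> \<and> convex_on X \<omega> \<and> continuous_on X \<omega>
     \<and> convex (dgf_dom X \<omega>)
     \<and> (\<forall>x\<in>dgf_dom X \<omega>. (\<omega> has_derivative (\<lambda>h. gw x \<bullet> h)) (at x within dgf_dom X \<omega>))
     \<and> continuous_on (dgf_dom X \<omega>) gw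
     \<and> (\<forall>x\<in>dgf_dom X \<omega>. \<forall>x'\<in>dgf_dom X \<omega>. (gw x' - gw x) \<bullet> (x' - x) \<ge> \<alpha> * (N (x' - x))\<^sup>2)"

definition bregman :: "('a::euclidean_space \<Rightarrow> real) \<Rightarrow> ('a \<Rightarrow> 'a) \<Rightarrow> 'a \<Rightarrow> 'a \<Rightarrow> real" where
  "bregman \<omega> gw x z = \<omega> z - \<omega> x - gw x \<bullet> (z - x)"

definition is_prox :: "'a::euclidean_space set \<Rightarrow> ('a \<Rightarrow> real) \<Rightarrow> ('a \<Rightarrow> 'a) \<Rightarrow> 'a \<Rightarrow> 'a \<Rightarrow> 'a \<Rightarrow> bool" where
  "is_prox X \<omega> gw x \<phi> z \<longleftrightarrow> z \<in> X \<and>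
     (\<forall>u\<in>X. \<phi> \<bullet> z + bregman \<omega> gw x z \<le> \<phi> \<bullet> u + bregman \<omega> gw x u)"

definition VI_sol :: "'a::euclidean_space set \<Rightarrow> ('a \<Rightarrow> 'a) \<Rightarrow> 'a set" where
  "VI_sol X F = {xs\<in>X. \<forall>x\<in>X. F xs \<bullet> (x - xs) \<ge> 0}"

end

theory Submission
  imports Defs
begin


lemma seg_in:
  assumes "convex S" "a \<in> S" "b \<in> S" "t \<in> {0..1::real}"
  shows "a + t *\<^sub>R (b - a) \<in> S"
proof -
  have "a + t *\<^sub>R (b - a) = (1 - t) *\<^sub>R a + t *\<^sub>R b" by (simp add: algebra_simps)
  thus ?thesis using assms by (metis atLeastAtMost_iff convex_alt)
qed

lemma seg_deriv:
  assumes dgf: "is_dgf X N \<omega> gw \<alpha>" and a: "a \<in> dgf_dom X \<omega>" and b: "b \<in> dgf_dom X \<omega>"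
    and t: "t \<in> {0..1}"
  shows "((\<lambda>s. \<omega> (a + s *\<^sub>R (b - a))) has_real_derivative (gw (a + t *\<^sub>R (b-a)) \<bullet> (b - a))) (at t within {0..1})"
proof -
  let ?p = "\<lambda>s::real. a + s *\<^sub>R (b - a)"
  have cv: "convex (dgf_dom X \<omega>)" using dgf by (simp add: is_dgf_def)
  have img: "?p ` {0..1} \<subseteq> dgf_dom X \<omega>" using seg_in[OF cv a b] by auto
  have pt: "?p t \<in> dgf_dom X \<omega>" using seg_in[OF cv a b t] .
  have dw: "(\<omega> has_derivative (\<lambda>h. gw (?p t) \<bullet> h)) (at (?p t) within dgf_dom X \<omega>)"
    using dgf pt by (simp add: is_dgf_def)
  have dw2: "(\<omega> has_derivative (\<lambda>h. gw (?p t) \<bullet> h)) (at (?p t) within ?p ` {0..1})"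
    using has_derivative_subset[OF dw img] .
  have dp: "(?p has_derivative (\<lambda>h. h *\<^sub>R (b - a))) (at t within {0..1})"
    by (auto intro!: derivative_eq_intros)
  have "((\<lambda>s. \<omega> (?p s)) has_derivative (\<lambda>h. gw (?p t) \<bullet> (h *\<^sub>R (b - a)))) (at t within {0..1})"
    using has_derivative_in_compose[OF dp dw2] .
  moreover have "(\<lambda>h. gw (?p t) \<bullet> (h *\<^sub>R (b - a))) = (\<lambda>h. (gw (?p t) \<bullet> (b - a)) * h)"
    by (auto simp: inner_scaleR_right)
  ultimately show ?thesis by (simp add: has_field_derivative_def)
qed

lemma deriv0_nonneg:
  fixes q :: "real \<Rightarrow> real"
  assumes d: "(q has_real_derivative D) (at 0 within {0..1})" and q0: "q 0 = 0"
    and nn: "\<And>s. s \<in> {0..1} \<Longrightarrow> q s \<ge> 0"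
  shows "D \<ge> 0"
proof -
  have lim: "((\<lambda>y. (q y - q 0) / (y - 0)) \<longlongrightarrow> D) (at_right 0)"
    using d unfolding has_field_derivative_iff by (simp add: at_within_Icc_at_right)
  have ev: "eventually (\<lambda>y. (q y - q 0) / (y - 0) \<ge> 0) (at_right (0::real))"
    unfolding eventually_at_right_field
    by (rule exI[of _ 1]) (auto intro!: divide_nonneg_pos nn simp: q0)
  show ?thesis by (rule tendsto_lowerbound[OF lim ev]) simp
qed

lemma subgrad_dom:
  assumes dgf: "is_dgf X N \<omega> gw \<alpha>" and z: "z \<in> dgf_dom X \<omega>" and g: "g \<in> subdiff X \<omega> z"
    and v: "v \<in> dgf_dom X \<omega>"
  shows "(gw z - g) \<bullet> (v - z) \<ge> 0"
proof -
  let ?q = "\<lambda>s::real. \<omega> (z + s *\<^sub>R (v - z)) - \<omega> z - s * (g \<bullet> (v - z))"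
  have cv: "convex (dgf_dom X \<omega>)" using dgf by (simp add: is_dgf_def)
  have d: "(?q has_real_derivative (gw z \<bullet> (v - z) - g \<bullet> (v - z))) (at 0 within {0..1})"
    using seg_deriv[OF dgf z v, of 0]
    by (auto intro!: derivative_eq_intros)
  have nn: "?q s \<ge> 0" if s: "s \<in> {0..1}" for s
  proof -
    have "z + s *\<^sub>R (v - z) \<in> dgf_dom X \<omega>" using seg_in[OF cv z v s] .
    hence "z + s *\<^sub>R (v - z) \<in> X" by (simp add: dgf_dom_def)
    hence "\<omega> z + g \<bullet> (z + s *\<^sub>R (v - z) - z) \<le> \<omega> (z + s *\<^sub>R (v - z))"
      using g unfolding subdiff_def by blast
    thus ?thesis by (simp add: inner_scaleR_right)
  qed
  have "gw z \<bullet> (v - z) - g \<bullet> (v - z) \<ge> 0" by (rule deriv0_nonneg[OF d _ nn]) auto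
  thus ?thesis by (simp add: inner_diff_left)
qed



lemma small_t:
  fixes x y c \<delta> :: real
  assumes "\<delta> > 0" "c \<ge> 0" "\<And>t. 0 < t \<Longrightarrow> t < \<delta> \<Longrightarrow> x \<le> y + t * c"
  shows "x \<le> y"
proof (rule ccontr)
  assume H: "\<not> x \<le> y"
  define t where "t = min (\<delta>/2) ((x - y)/(2*(c+1)))"
  have t0: "0 < t" using H assms(1,2) by (simp add: t_def)
  have t1: "t < \<delta>" using assms(1) by (simp add: t_def)
  have "t * c \<le> (x - y)/(2*(c+1)) * c" using assms(2) by (intro mult_right_mono) (auto simp: t_def)
  also have "\<dots> < x - y"
  proof -
    have "(x - y)/(2*(c+1)) * c = (x - y) * (c / (2*(c+1)))" by simp
    also have "\<dots> < (x - y) * 1"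
      using H assms(2) by (intro mult_strict_left_mono) (auto simp: divide_simps)
    finally show ?thesis by simp
  qed
  finally show False using assms(3)[OF t0 t1] by linarith
qed

lemma dense_dom:
  assumes dgf: "is_dgf X N \<omega> gw \<alpha>" and cl: "closed X" and cvX: "convex X" and u: "u \<in> X"
  shows "u \<in> closure (dgf_dom X \<omega>)"
  unfolding closure_approachable
proof (intro allI impI)
  fix e :: real assume e: "e > 0"
  have cont: "continuous_on X \<omega>" and cvo: "convex_on X \<omega>" using dgf by (auto simp: is_dgf_def)
  define K where "K = X \<inter> cball u e"
  have Kc: "compact K" unfolding K_def using cl by (simp add: closed_Int_compact)
  have uK: "u \<in> K" using u e by (simp add: K_def)
  have KX: "K \<subseteq> X" by (auto simp: K_def)
  have contK: "continuous_on K \<omega>" using continuous_on_subset[OF cont KX] .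
  obtain v0 where v0: "v0 \<in> K" "\<forall>w\<in>K. \<omega> v0 \<le> \<omega> w"
    using continuous_attains_inf[OF Kc _ contK] uK by blast
  define C where "C = \<omega> u - \<omega> v0"
  have C0: "C \<ge> 0" using v0 uK by (simp add: C_def)
  define lam where "lam = e^2 / (8*(C+1))"
  have lam0: "lam > 0" using e C0 by (simp add: lam_def)
  define \<Phi> where "\<Phi> = (\<lambda>w. \<omega> w + (norm (w - u))^2 / (2*lam))"
  have contP: "continuous_on K \<Phi>" unfolding \<Phi>_def using lam0 by (intro continuous_intros contK) auto
  obtain v where v: "v \<in> K" "\<forall>w\<in>K. \<Phi> v \<le> \<Phi> w"
    using continuous_attains_inf[OF Kc _ contP] uK by blast
  have vX: "v \<in> X" using v KX by auto
  have "\<Phi> v \<le> \<Phi> u" using v uK by auto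
  hence "\<omega> v + (norm (v - u))^2 / (2*lam) \<le> \<omega> u" by (simp add: \<Phi>_def)
  moreover have "\<omega> v0 \<le> \<omega> v" using v0 v by auto
  ultimately have "(norm (v - u))^2 / (2*lam) \<le> C" by (simp add: C_def)
  hence h: "(norm (v - u))^2 / (2*lam) \<le> C" .
  have "(norm (v - u))^2 = ((norm (v - u))^2 / (2*lam)) * (2*lam)" using lam0 by simp
  also have "\<dots> \<le> C * (2*lam)" using h lam0 by (intro mult_right_mono) auto
  also have "C * (2*lam) = (e/2)^2 * (C/(C+1))" using C0 by (simp add: lam_def power2_eq_square field_simps)
  also have "\<dots> < (e/2)^2 * 1" using C0 e by (intro mult_strict_left_mono) auto
  finally have "(norm (v - u))^2 < (e/2)^2" by simp
  hence nvu: "norm (v - u) < e/2" using e by (metis half_gt_zero_iff less_eq_real_def power2_less_imp_less)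
  have sg: "(u - v) /\<^sub>R lam \<in> subdiff X \<omega> v"
    unfolding subdiff_def
  proof (intro CollectI ballI)
    fix w assume w: "w \<in> X"
    define B where "B = (v - u) \<bullet> (w - v)"
    define Cw where "Cw = (norm (w - v))^2"
    have lhs: "((u - v) /\<^sub>R lam) \<bullet> (w - v) = - B / lam"
      by (simp add: B_def inner_diff_left inner_diff_right divide_simps)
    show "\<omega> v + ((u - v) /\<^sub>R lam) \<bullet> (w - v) \<le> \<omega> w"
    proof (cases "w = v")
      case True thus ?thesis by simp
    next
      case False
      hence nwv: "norm (w - v) > 0" by simp
      define \<delta> where "\<delta> = min 1 ((e/2) / norm (w - v))"
      have d0: "\<delta> > 0" using nwv e by (simp add: \<delta>_def)
      have key: "\<omega> v \<le> (\<omega> w + B / lam) + t * (Cw / (2*lam))" if t: "0 < t" "t < \<delta>" for t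
      proof -
        define wt where "wt = v + t *\<^sub>R (w - v)"
        have t01: "t \<in> {0..1}" using t by (simp add: \<delta>_def)
        have wtX: "wt \<in> X" unfolding wt_def by (rule seg_in[OF cvX vX w t01])
        have "t * norm (w - v) < e/2"
          using t nwv by (simp add: \<delta>_def less_divide_eq)
        have "wt - u = (v - u) + t *\<^sub>R (w - v)" by (simp add: wt_def algebra_simps)
        hence "norm (wt - u) \<le> norm (v - u) + norm (t *\<^sub>R (w - v))"
          by (metis norm_triangle_ineq)
        also have "norm (t *\<^sub>R (w - v)) = t * norm (w - v)" using t by simp
        finally have "norm (wt - u) < e"
          using nvu \<open>t * norm (w - v) < e/2\<close> by linarith
        hence wtK: "wt \<in> K" using wtX by (simp add: K_def dist_norm norm_minus_commute)
        have P: "\<Phi> v \<le> \<Phi> wt" using v wtK by auto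
        have cvx: "\<omega> wt \<le> (1 - t) * \<omega> v + t * \<omega> w"
        proof -
          have "wt = (1 - t) *\<^sub>R v + t *\<^sub>R w" by (simp add: wt_def algebra_simps)
          thus ?thesis using convex_onD[OF cvo, of t v w] t01 vX w by simp
        qed
        have nq: "(norm (wt - u))^2 = (norm (v - u))^2 + 2*t*B + t^2 * Cw"
        proof -
          have "wt - u = (v - u) + t *\<^sub>R (w - v)" by (simp add: wt_def algebra_simps)
          hence "(norm (wt - u))^2 = (norm ((v - u) + t *\<^sub>R (w - v)))^2" by (rule arg_cong[where f="\<lambda>x. (norm x)^2"])
          also have "\<dots> = (norm (v - u))^2 + 2 * ((v - u) \<bullet> (t *\<^sub>R (w - v))) + (norm (t *\<^sub>R (w - v)))^2"
            using dot_norm[of "v - u" "t *\<^sub>R (w - v)"] by simp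
          also have "\<dots> = (norm (v - u))^2 + 2*t*B + t^2 * Cw"
            by (simp add: B_def Cw_def power_mult_distrib)
          finally show ?thesis .
        qed
        have "\<omega> v + (norm (v - u))^2 / (2*lam) \<le> (1 - t) * \<omega> v + t * \<omega> w + ((norm (v - u))^2 + 2*t*B + t^2 * Cw) / (2*lam)"
          using P cvx nq by (simp add: \<Phi>_def)
        hence "t * \<omega> v \<le> t * \<omega> w + (2*t*B + t^2 * Cw) / (2*lam)"
          by (simp add: add_divide_distrib algebra_simps)
        also have "\<dots> = t * ((\<omega> w + B / lam) + t * (Cw / (2*lam)))"
          using lam0 by (simp add: field_simps power2_eq_square)
        finally show ?thesis using t by simp
      qed
      have "\<omega> v \<le> \<omega> w + B / lam"
        by (rule small_t[OF d0 _ key]) (use lam0 in \<open>auto simp: Cw_def\<close>)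
      thus ?thesis using lhs by simp
    qed
  qed
  have "v \<in> dgf_dom X \<omega>" using sg vX by (auto simp: dgf_dom_def)
  moreover have "dist v u < e" using nvu e by (simp add: dist_norm)
  ultimately show "\<exists>y\<in>dgf_dom X \<omega>. dist y u < e" by blast
qed



lemma subgrad_X:
  assumes dgf: "is_dgf X N \<omega> gw \<alpha>" and cl: "closed X" and cvX: "convex X"
    and z: "z \<in> dgf_dom X \<omega>" and g: "g \<in> subdiff X \<omega> z" and u: "u \<in> X"
  shows "(gw z - g) \<bullet> (u - z) \<ge> 0"
proof -
  let ?H = "{w. (gw z - g) \<bullet> w \<ge> (gw z - g) \<bullet> z}"
  have cH: "closed ?H" by (rule closed_halfspace_ge)
  have "dgf_dom X \<omega> \<subseteq> ?H"
    using subgrad_dom[OF dgf z g] by (auto simp: inner_diff_right)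
  hence "closure (dgf_dom X \<omega>) \<subseteq> ?H" using closure_minimal cH by blast
  moreover have "u \<in> closure (dgf_dom X \<omega>)" by (rule dense_dom[OF dgf cl cvX u])
  ultimately show ?thesis by (auto simp: inner_diff_right)
qed

lemma prox_subgrad:
  assumes prox: "is_prox X \<omega> gw x \<phi> z"
  shows "gw x - \<phi> \<in> subdiff X \<omega> z" "z \<in> dgf_dom X \<omega>"
proof -
  show sg: "gw x - \<phi> \<in> subdiff X \<omega> z"
    unfolding subdiff_def
  proof (intro CollectI ballI)
    fix w assume w: "w \<in> X"
    have "\<phi> \<bullet> z + bregman \<omega> gw x z \<le> \<phi> \<bullet> w + bregman \<omega> gw x w"
      using prox w by (simp add: is_prox_def)
    thus "\<omega> z + (gw x - \<phi>) \<bullet> (w - z) \<le> \<omega> w"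
      by (simp add: bregman_def inner_diff_left inner_diff_right)
  qed
  show "z \<in> dgf_dom X \<omega>" using sg prox by (auto simp: dgf_dom_def is_prox_def)
qed

lemma three_point:
  assumes dgf: "is_dgf X N \<omega> gw \<alpha>" and cl: "closed X" and cvX: "convex X"
    and prox: "is_prox X \<omega> gw x \<phi> z" and u: "u \<in> X"
  shows "\<phi> \<bullet> (z - u) \<le> bregman \<omega> gw x u - bregman \<omega> gw z u - bregman \<omega> gw x z"
proof -
  have "(gw z - (gw x - \<phi>)) \<bullet> (u - z) \<ge> 0"
    using subgrad_X[OF dgf cl cvX prox_subgrad(2)[OF prox] prox_subgrad(1)[OF prox] u] .
  thus ?thesis
    by (simp add: bregman_def inner_diff_left inner_diff_right)
qed

lemma norm_props:
  assumes "is_norm N"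
  shows "N (c *\<^sub>R v) = \<bar>c\<bar> * N v" "N v \<ge> 0" "N (- v) = N v" "N (a - b) = N (b - a)"
proof -
  show h: "N (c *\<^sub>R v) = \<bar>c\<bar> * N v" for c v using assms by (simp add: is_norm_def)
  show "N v \<ge> 0" using assms by (simp add: is_norm_def)
  show "N (- v) = N v" using h[of "-1" v] by simp
  show "N (a - b) = N (b - a)" using h[of "-1" "b - a"] by simp
qed

lemma strong:
  assumes dgf: "is_dgf X N \<omega> gw \<alpha>" and nrm: "is_norm N"
    and a: "a \<in> dgf_dom X \<omega>" and b: "b \<in> dgf_dom X \<omega>"
  shows "bregman \<omega> gw a b \<ge> \<alpha> / 2 * (N (b - a))^2"
proof -
  define n where "n = N (b - a)"
  define c where "c = gw a \<bullet> (b - a)"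
  define f where "f = (\<lambda>s::real. \<omega> (a + s *\<^sub>R (b - a)) - s * c - \<alpha> / 2 * s^2 * n^2)"
  have cv: "convex (dgf_dom X \<omega>)" using dgf by (simp add: is_dgf_def)
  have mono: "\<forall>x\<in>dgf_dom X \<omega>. \<forall>x'\<in>dgf_dom X \<omega>. (gw x' - gw x) \<bullet> (x' - x) \<ge> \<alpha> * (N (x' - x))\<^sup>2"
    using dgf by (simp add: is_dgf_def)
  have df: "(f has_real_derivative (gw (a + t *\<^sub>R (b-a)) \<bullet> (b - a) - c - \<alpha> * t * n^2)) (at t within {0..1})"
    if t: "t \<in> {0..1}" for t
    unfolding f_def
    using seg_deriv[OF dgf a b t]
    by (auto intro!: derivative_eq_intros simp: power2_eq_square)
  have "f 0 \<le> f 1"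
  proof (rule DERIV_nonneg_imp_increasing_open[of 0 1])
    fix t :: real assume t: "0 < t" "t < 1"
    have "(f has_real_derivative (gw (a + t *\<^sub>R (b-a)) \<bullet> (b - a) - c - \<alpha> * t * n^2)) (at t)"
      using df[of t] t by (simp add: at_within_Icc_at)
    moreover have "gw (a + t *\<^sub>R (b-a)) \<bullet> (b - a) - c - \<alpha> * t * n^2 \<ge> 0"
    proof -
      have pt: "a + t *\<^sub>R (b - a) \<in> dgf_dom X \<omega>" using seg_in[OF cv a b] t by auto
      have "(gw (a + t *\<^sub>R (b - a)) - gw a) \<bullet> (a + t *\<^sub>R (b - a) - a) \<ge> \<alpha> * (N (a + t *\<^sub>R (b - a) - a))\<^sup>2"
        using mono pt a by blast
      hence "t * ((gw (a + t *\<^sub>R (b - a)) - gw a) \<bullet> (b - a)) \<ge> t * (t * (\<alpha> * n^2))"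
        using t by (simp add: norm_props(1)[OF nrm] n_def power_mult_distrib power2_eq_square mult_ac)
      hence "(gw (a + t *\<^sub>R (b - a)) - gw a) \<bullet> (b - a) \<ge> t * (\<alpha> * n^2)"
        using t by (simp add: mult_le_cancel_left_pos)
      thus ?thesis by (simp add: c_def inner_diff_left mult_ac)
    qed
    ultimately show "\<exists>y. (f has_real_derivative y) (at t) \<and> y \<ge> 0" by blast
  next
    show "continuous_on {0..1} f"
      unfolding continuous_on_eq_continuous_within
      using df DERIV_continuous by blast
  qed auto
  thus ?thesis by (simp add: f_def bregman_def c_def n_def)
qed



lemma norm_lower:
  fixes N :: "'a::euclidean_space \<Rightarrow> real"
  assumes nrm: "is_norm N"
  shows "\<exists>c>0. \<forall>x. c * norm x \<le> N x"
proof -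
  have hom: "N (c *\<^sub>R v) = \<bar>c\<bar> * N v" for c v using nrm by (simp add: is_norm_def)
  have tri: "N (x + y) \<le> N x + N y" for x y using nrm by (simp add: is_norm_def)
  have z: "N x = 0 \<longleftrightarrow> x = 0" for x using nrm by (simp add: is_norm_def)
  have "convex_on UNIV N"
    unfolding convex_on_def
  proof (intro conjI ballI allI impI)
    fix x y :: 'a and u v :: real assume uv: "u \<ge> 0" "v \<ge> 0" "u + v = 1"
    have "N (u *\<^sub>R x + v *\<^sub>R y) \<le> N (u *\<^sub>R x) + N (v *\<^sub>R y)" by (rule tri)
    thus "N (u *\<^sub>R x + v *\<^sub>R y) \<le> u * N x + v * N y" using uv by (simp add: hom)
  qed simp
  hence cont: "continuous_on UNIV N" by (rule convex_on_continuous[OF open_UNIV])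
  obtain b :: 'a where b: "b \<in> Basis" using nonempty_Basis by blast
  have ne: "sphere (0::'a) 1 \<noteq> {}" using b by (auto simp: dist_norm)
  obtain m where m: "m \<in> sphere (0::'a) 1" "\<forall>y\<in>sphere 0 1. N m \<le> N y"
    using continuous_attains_inf[OF compact_sphere ne continuous_on_subset[OF cont]] by blast
  have m0: "m \<noteq> 0" using m by auto
  have c0: "N m > 0" using z[of m] m0 nrm by (auto simp: is_norm_def less_le)
  have "N m * norm x \<le> N x" for x
  proof (cases "x = 0")
    case True thus ?thesis using z[of 0] by simp
  next
    case False
    have "x /\<^sub>R norm x \<in> sphere 0 1" using False by simp
    hence "N m \<le> N (x /\<^sub>R norm x)" using m by blast
    also have "\<dots> = N x / norm x" by (simp add: hom divide_inverse_commute)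
    finally show ?thesis using False by (simp add: field_simps)
  qed
  thus ?thesis using c0 by blast
qed

lemma dual_ineq:
  fixes N :: "'a::euclidean_space \<Rightarrow> real"
  assumes nrm: "is_norm N"
  shows "\<phi> \<bullet> v \<le> dual_norm N \<phi> * N v" "dual_norm N \<phi> \<ge> 0"
proof -
  have hom: "N (c *\<^sub>R v) = \<bar>c\<bar> * N v" for c v using nrm by (simp add: is_norm_def)
  have z: "N x = 0 \<longleftrightarrow> x = 0" for x using nrm by (simp add: is_norm_def)
  have nn: "N x \<ge> 0" for x using nrm by (simp add: is_norm_def)
  obtain c where c: "c > 0" "\<forall>x. c * norm x \<le> N x" using norm_lower[OF nrm] by blast
  let ?S = "{\<phi> \<bullet> x | x. N x \<le> 1}"
  have bdd: "bdd_above ?S"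
  proof (rule bdd_aboveI)
    fix r assume "r \<in> ?S"
    then obtain x where x: "r = \<phi> \<bullet> x" "N x \<le> 1" by blast
    have "c * norm x \<le> 1" using c x(2) by (meson order_trans)
    hence "norm x \<le> 1 / c" using c by (simp add: le_divide_eq mult.commute)
    hence "norm \<phi> * norm x \<le> norm \<phi> * (1/c)" by (intro mult_left_mono) auto
    thus "r \<le> norm \<phi> / c" using x(1) norm_cauchy_schwarz[of \<phi> x] by simp
  qed
  have "N 0 \<le> 1" using z[of 0] by simp
  hence in0: "0 \<in> ?S" by (metis (mono_tags, lifting) inner_zero_right mem_Collect_eq)
  show d0: "dual_norm N \<phi> \<ge> 0"
    unfolding dual_norm_def using cSup_upper[OF in0 bdd] .
  show "\<phi> \<bullet> v \<le> dual_norm N \<phi> * N v"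
  proof (cases "v = 0")
    case True thus ?thesis using z[of 0] by simp
  next
    case False
    hence "N v \<noteq> 0" using z by simp
    hence Nv: "N v > 0" using nn[of v] by linarith
    define w where "w = v /\<^sub>R N v"
    have "N w = 1" using Nv by (simp add: w_def hom)
    hence "\<phi> \<bullet> w \<in> ?S" by (metis (mono_tags, lifting) mem_Collect_eq order_refl)
    hence "\<phi> \<bullet> w \<le> dual_norm N \<phi>" unfolding dual_norm_def by (rule cSup_upper[OF _ bdd])
    hence "N v * (\<phi> \<bullet> w) \<le> N v * dual_norm N \<phi>" using Nv by (simp add: mult_left_mono)
    moreover have "N v * (\<phi> \<bullet> w) = \<phi> \<bullet> v" using Nv by (simp add: w_def)
    ultimately show ?thesis by (simp add: mult.commute)
  qed
qed



lemma step_ineq: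
  assumes dgf: "is_dgf X N \<omega> gw \<alpha>" and nrm: "is_norm N" and cl: "closed X" and cvX: "convex X"
    and genmono: "\<forall>xs\<in>VI_sol X F. \<forall>z\<in>X. F z \<bullet> (z - xs) \<ge> 0"
    and xs: "xs \<in> VI_sol X F" and g: "\<gamma> > 0"
    and py: "is_prox X \<omega> gw x (\<gamma> *\<^sub>R F x) y" and pz: "is_prox X \<omega> gw x (\<gamma> *\<^sub>R F y) z"
  shows "- (\<gamma>\<^sup>2 / (2 * \<alpha>)) * (dual_norm N (F x - F y))\<^sup>2 + bregman \<omega> gw x y
           \<le> bregman \<omega> gw x xs - bregman \<omega> gw z xs"
proof -
  have a0: "\<alpha> > 0" using dgf by (simp add: is_dgf_def)
  have xsX: "xs \<in> X" using xs by (simp add: VI_sol_def)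
  have yX: "y \<in> X" and zX: "z \<in> X" using py pz by (auto simp: is_prox_def)
  have yD: "y \<in> dgf_dom X \<omega>" and zD: "z \<in> dgf_dom X \<omega>"
    using prox_subgrad(2)[OF py] prox_subgrad(2)[OF pz] by auto
  define D where "D = dual_norm N (F x - F y)"
  define n where "n = N (z - y)"
  have t1: "(\<gamma> *\<^sub>R F y) \<bullet> (z - xs) \<le> bregman \<omega> gw x xs - bregman \<omega> gw z xs - bregman \<omega> gw x z"
    by (rule three_point[OF dgf cl cvX pz xsX])
  have t2: "(\<gamma> *\<^sub>R F x) \<bullet> (y - z) \<le> bregman \<omega> gw x z - bregman \<omega> gw y z - bregman \<omega> gw x y"
    by (rule three_point[OF dgf cl cvX py zX])
  have m: "F y \<bullet> (y - xs) \<ge> 0" using genmono xs yX by blast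
  have d: "(F x - F y) \<bullet> (z - y) \<le> D * n" unfolding D_def n_def by (rule dual_ineq(1)[OF nrm])
  have s: "bregman \<omega> gw y z \<ge> \<alpha> / 2 * n^2" unfolding n_def by (rule strong[OF dgf nrm yD zD])
  have e1: "(\<gamma> *\<^sub>R F y) \<bullet> (z - xs) = \<gamma> * (F y \<bullet> (y - xs)) + \<gamma> * (F y \<bullet> (z - y))"
    by (simp add: inner_diff_right algebra_simps)
  have e2: "(\<gamma> *\<^sub>R F x) \<bullet> (y - z) = - (\<gamma> * (F x \<bullet> (z - y)))"
    by (simp add: inner_diff_right algebra_simps)
  have e3: "(F x - F y) \<bullet> (z - y) = F x \<bullet> (z - y) - F y \<bullet> (z - y)" by (simp add: inner_diff_left)
  have p: "\<gamma> * (F y \<bullet> (y - xs)) \<ge> 0" using g m by simp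
  have q: "\<gamma> * ((F x - F y) \<bullet> (z - y)) \<le> \<gamma> * (D * n)" using g d by (simp add: mult_left_mono)
  have q2: "\<gamma> * ((F x - F y) \<bullet> (z - y)) = \<gamma> * (F x \<bullet> (z - y)) - \<gamma> * (F y \<bullet> (z - y))"
    using e3 by (simp add: algebra_simps)
  have main: "bregman \<omega> gw x y + \<alpha> / 2 * n^2 - \<gamma> * (D * n) \<le> bregman \<omega> gw x xs - bregman \<omega> gw z xs"
    using t1 t2 e1 e2 p q q2 s by linarith
  have sq: "\<alpha> / 2 * n^2 - \<gamma> * (D * n) + (\<gamma>\<^sup>2 / (2 * \<alpha>)) * D^2 = (\<alpha> * n - \<gamma> * D)^2 / (2 * \<alpha>)"
    using a0 by (simp add: field_simps power2_eq_square)
  have "(\<alpha> * n - \<gamma> * D)^2 / (2 * \<alpha>) \<ge> 0" using a0 by simp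
  thus ?thesis using main sq unfolding D_def by linarith
qed

lemma mm_bound:
  fixes a V m :: real assumes a0: "a > 0" and hV: "V \<ge> a / 2 * m^2" shows "m * m \<le> 2 * V / a"
proof -
  have "m * m = (a / 2 * m^2) * (2 / a)" using a0 by (simp add: power2_eq_square)
  also have "\<dots> \<le> V * (2 / a)" using hV a0 by (intro mult_right_mono) auto
  finally show ?thesis by (simp add: mult.commute)
qed

lemma holder_bound:
  fixes \<alpha> \<gamma> L \<nu> D m V :: real
  assumes a0: "\<alpha> > 0" and L: "L > 0" and nu: "0 < \<nu>" and D0: "D \<ge> 0" and m0: "m \<ge> 0"
    and hD: "D \<le> L * m powr \<nu>" and hV: "V \<ge> \<alpha> / 2 * m^2"
  shows "(\<gamma>\<^sup>2 / (2 * \<alpha>)) * D^2 \<le> 2 powr (\<nu> - 1) * L\<^sup>2 * \<gamma>\<^sup>2 * \<alpha> powr (- (1 + \<nu>)) * V powr \<nu>"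
proof -
  have "\<alpha> / 2 * m^2 \<ge> 0" using a0 by simp
  hence V0: "V \<ge> 0" using hV by linarith
  have "D^2 \<le> (L * m powr \<nu>)^2" using D0 hD by (simp add: power_mono)
  also have "\<dots> = L^2 * (m * m) powr \<nu>" using m0 by (simp add: powr_mult power2_eq_square mult_ac)
  also have "\<dots> \<le> L^2 * (2 * V / \<alpha>) powr \<nu>"
  proof -
    have "m * m \<le> 2 * V / \<alpha>" by (rule mm_bound[OF a0 hV])
    hence "(m * m) powr \<nu> \<le> (2 * V / \<alpha>) powr \<nu>" using nu m0 by (intro powr_mono2) auto
    thus ?thesis by (intro mult_left_mono) auto
  qed
  also have "\<dots> = L^2 * (2 powr \<nu> * V powr \<nu> / \<alpha> powr \<nu>)"
    using V0 a0 by (simp add: powr_divide powr_mult)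
  finally have hD2: "D^2 \<le> L^2 * (2 powr \<nu> * V powr \<nu> / \<alpha> powr \<nu>)" .
  have "(\<gamma>\<^sup>2 / (2 * \<alpha>)) * D^2 \<le> (\<gamma>\<^sup>2 / (2 * \<alpha>)) * (L^2 * (2 powr \<nu> * V powr \<nu> / \<alpha> powr \<nu>))"
    using hD2 a0 by (intro mult_left_mono) auto
  also have "\<dots> = 2 powr \<nu> / 2 * L\<^sup>2 * \<gamma>\<^sup>2 * (1 / (\<alpha> * \<alpha> powr \<nu>)) * V powr \<nu>"
    using a0 by (simp add: field_simps)
  also have "\<dots> = 2 powr (\<nu> - 1) * L\<^sup>2 * \<gamma>\<^sup>2 * \<alpha> powr (- (1 + \<nu>)) * V powr \<nu>"
  proof -
    have e1: "2 powr (\<nu> - 1) = 2 powr \<nu> / 2" by (simp add: powr_diff)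
    have "\<alpha> powr (- (1 + \<nu>)) = inverse (\<alpha> powr (1 + \<nu>))" by (rule powr_minus)
    also have "\<alpha> powr (1 + \<nu>) = \<alpha> * \<alpha> powr \<nu>" using a0 by (simp add: powr_add)
    finally have e2: "\<alpha> powr (- (1 + \<nu>)) = 1 / (\<alpha> * \<alpha> powr \<nu>)" by (simp add: divide_inverse)
    show ?thesis by (simp only: e1 e2)
  qed
  finally show ?thesis .
qed

lemma lip_bound:
  fixes \<alpha> \<gamma> L D m V :: real
  assumes a0: "\<alpha> > 0" and L: "L > 0" and D0: "D \<ge> 0" and m0: "m \<ge> 0"
    and hD: "D \<le> L * m" and hV: "V \<ge> \<alpha> / 2 * m^2"
  shows "(\<gamma>\<^sup>2 / (2 * \<alpha>)) * D^2 \<le> L\<^sup>2 * (\<gamma>)\<^sup>2 / \<alpha>\<^sup>2 * V"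
proof -
  have "D^2 \<le> (L * m)^2" using D0 hD by (simp add: power_mono)
  also have "\<dots> = L^2 * (m * m)" by (simp add: power_mult_distrib power2_eq_square)
  also have "\<dots> \<le> L^2 * (2 * V / \<alpha>)"
    using mm_bound[OF a0 hV] by (intro mult_left_mono) auto
  finally have "D^2 \<le> L^2 * (2 * V / \<alpha>)" .
  hence "(\<gamma>\<^sup>2 / (2 * \<alpha>)) * D^2 \<le> (\<gamma>\<^sup>2 / (2 * \<alpha>)) * (L^2 * (2 * V / \<alpha>))"
    using a0 by (intro mult_left_mono) auto
  also have "\<dots> = L\<^sup>2 * (\<gamma>)\<^sup>2 / \<alpha>\<^sup>2 * V" using a0 by (simp add: field_simps power2_eq_square)
  finally show ?thesis .
qed

theorem lemma5:
  fixes X :: "'a::euclidean_space set" and F :: "'a \<Rightarrow> 'a"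
    and N :: "'a \<Rightarrow> real" and \<omega> :: "'a \<Rightarrow> real" and gw :: "'a \<Rightarrow> 'a" and \<alpha> :: real
    and \<gamma> :: "nat \<Rightarrow> real" and x y :: "nat \<Rightarrow> 'a"
  assumes norm: "is_norm N"
    and X: "X \<noteq> {}" "closed X" "convex X"
    and Fcont: "continuous_on X F"
    and sol_ne: "VI_sol X F \<noteq> {}"
    and genmono: "\<forall>xs\<in>VI_sol X F. \<forall>z\<in>X. F z \<bullet> (z - xs) \<ge> 0"
    and dgf: "is_dgf X N \<omega> gw \<alpha>"
    and x1: "x 1 \<in> dgf_dom X \<omega>"
    and step: "\<forall>k\<ge>1. \<gamma> k > 0"
    and yk: "\<forall>k\<ge>1. is_prox X \<omega> gw (x k) (\<gamma> k *\<^sub>R F (x k)) (y k)"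
    and xk: "\<forall>k\<ge>1. is_prox X \<omega> gw (x k) (\<gamma> k *\<^sub>R F (y k)) (x (Suc k))"
  shows "(\<exists>xs\<in>VI_sol X F. \<forall>k\<ge>1.
            - ((\<gamma> k)\<^sup>2 / (2 * \<alpha>)) * (dual_norm N (F (x k) - F (y k)))\<^sup>2
              + bregman \<omega> gw (x k) (y k)
            \<le> bregman \<omega> gw (x k) xs - bregman \<omega> gw (x (Suc k)) xs)
      \<and> (\<forall>L \<nu>. L > 0 \<and> 0 < \<nu> \<and> \<nu> \<le> 1 \<and>
            (\<forall>u\<in>X. \<forall>v\<in>X. dual_norm N (F u - F v) \<le> L * N (u - v) powr \<nu>) \<longrightarrow>
          (\<exists>xs\<in>VI_sol X F. \<forall>k\<ge>1.
            bregman \<omega> gw (x k) (y k)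
              - 2 powr (\<nu> - 1) * L\<^sup>2 * (\<gamma> k)\<^sup>2 * \<alpha> powr (- (1 + \<nu>))
                * (bregman \<omega> gw (x k) (y k)) powr \<nu>
            \<le> bregman \<omega> gw (x k) xs - bregman \<omega> gw (x (Suc k)) xs))
      \<and> (\<forall>L. L > 0 \<and> (\<forall>u\<in>X. \<forall>v\<in>X. dual_norm N (F u - F v) \<le> L * N (u - v)) \<longrightarrow>
          (\<exists>xs\<in>VI_sol X F. \<forall>k\<ge>1.
            (1 - L\<^sup>2 * (\<gamma> k)\<^sup>2 / \<alpha>\<^sup>2) * bregman \<omega> gw (x k) (y k)
            \<le> bregman \<omega> gw (x k) xs - bregman \<omega> gw (x (Suc k)) xs))"
proof -
  have a0: "\<alpha> > 0" using dgf by (simp add: is_dgf_def)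
  obtain xs where xs: "xs \<in> VI_sol X F" using sol_ne by blast
  have xD: "x k \<in> dgf_dom X \<omega>" if k: "k \<ge> 1" for k
  proof (cases k)
    case 0 thus ?thesis using k by simp
  next
    case (Suc j)
    show ?thesis
    proof (cases "j = 0")
      case True thus ?thesis using Suc x1 by simp
    next
      case False
      hence "j \<ge> 1" by simp
      hence "is_prox X \<omega> gw (x j) (\<gamma> j *\<^sub>R F (y j)) (x (Suc j))" using xk by blast
      thus ?thesis using Suc prox_subgrad(2) by blast
    qed
  qed
  have yD: "y k \<in> dgf_dom X \<omega>" if k: "k \<ge> 1" for k
  proof -
    have "is_prox X \<omega> gw (x k) (\<gamma> k *\<^sub>R F (x k)) (y k)" using yk k by blast
    thus ?thesis using prox_subgrad(2) by blast
  qed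
  have xX: "x k \<in> X" if "k \<ge> 1" for k using xD[OF that] by (simp add: dgf_dom_def)
  have yX: "y k \<in> X" if "k \<ge> 1" for k using yD[OF that] by (simp add: dgf_dom_def)
  have base: "- ((\<gamma> k)\<^sup>2 / (2 * \<alpha>)) * (dual_norm N (F (x k) - F (y k)))\<^sup>2 + bregman \<omega> gw (x k) (y k)
            \<le> bregman \<omega> gw (x k) xs - bregman \<omega> gw (x (Suc k)) xs" if k: "k \<ge> 1" for k
    using step_ineq[OF dgf norm X(2) X(3) genmono xs, of "\<gamma> k" "x k" "y k" "x (Suc k)"] step yk xk k
    by blast
  have sv: "bregman \<omega> gw (x k) (y k) \<ge> \<alpha> / 2 * (N (x k - y k))^2" if k: "k \<ge> 1" for k
    using strong[OF dgf norm xD[OF k] yD[OF k]] norm_props(4)[OF norm, of "x k" "y k"] by simp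
  have D0: "dual_norm N (F (x k) - F (y k)) \<ge> 0" for k using dual_ineq(2)[OF norm] .
  have m0: "N (x k - y k) \<ge> 0" for k using norm_props(2)[OF norm] .
  have PA: "\<exists>xs\<in>VI_sol X F. \<forall>k\<ge>1.
            - ((\<gamma> k)\<^sup>2 / (2 * \<alpha>)) * (dual_norm N (F (x k) - F (y k)))\<^sup>2
              + bregman \<omega> gw (x k) (y k)
            \<le> bregman \<omega> gw (x k) xs - bregman \<omega> gw (x (Suc k)) xs"
    using xs base by blast
  have PB: "\<forall>L \<nu>. L > 0 \<and> 0 < \<nu> \<and> \<nu> \<le> 1 \<and>
            (\<forall>u\<in>X. \<forall>v\<in>X. dual_norm N (F u - F v) \<le> L * N (u - v) powr \<nu>) \<longrightarrow>
          (\<exists>xs\<in>VI_sol X F. \<forall>k\<ge>1.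
            bregman \<omega> gw (x k) (y k)
              - 2 powr (\<nu> - 1) * L\<^sup>2 * (\<gamma> k)\<^sup>2 * \<alpha> powr (- (1 + \<nu>))
                * (bregman \<omega> gw (x k) (y k)) powr \<nu>
            \<le> bregman \<omega> gw (x k) xs - bregman \<omega> gw (x (Suc k)) xs)"
  proof (intro allI impI)
    fix L \<nu> :: real
    assume H: "L > 0 \<and> 0 < \<nu> \<and> \<nu> \<le> 1 \<and>
            (\<forall>u\<in>X. \<forall>v\<in>X. dual_norm N (F u - F v) \<le> L * N (u - v) powr \<nu>)"
    show "\<exists>xs\<in>VI_sol X F. \<forall>k\<ge>1.
            bregman \<omega> gw (x k) (y k)
              - 2 powr (\<nu> - 1) * L\<^sup>2 * (\<gamma> k)\<^sup>2 * \<alpha> powr (- (1 + \<nu>))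
                * (bregman \<omega> gw (x k) (y k)) powr \<nu>
            \<le> bregman \<omega> gw (x k) xs - bregman \<omega> gw (x (Suc k)) xs"
    proof (intro bexI[OF _ xs] allI impI)
      fix k :: nat assume k: "k \<ge> 1"
      have hD: "dual_norm N (F (x k) - F (y k)) \<le> L * N (x k - y k) powr \<nu>"
        using H xX[OF k] yX[OF k] by blast
      have "((\<gamma> k)\<^sup>2 / (2 * \<alpha>)) * (dual_norm N (F (x k) - F (y k)))^2
          \<le> 2 powr (\<nu> - 1) * L\<^sup>2 * (\<gamma> k)\<^sup>2 * \<alpha> powr (- (1 + \<nu>)) * (bregman \<omega> gw (x k) (y k)) powr \<nu>"
        using holder_bound[OF a0 _ _ D0 m0 hD sv[OF k]] H by blast
      thus "bregman \<omega> gw (x k) (y k)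
              - 2 powr (\<nu> - 1) * L\<^sup>2 * (\<gamma> k)\<^sup>2 * \<alpha> powr (- (1 + \<nu>))
                * (bregman \<omega> gw (x k) (y k)) powr \<nu>
            \<le> bregman \<omega> gw (x k) xs - bregman \<omega> gw (x (Suc k)) xs"
        using base[OF k] by linarith
    qed
  qed
  have PC: "\<forall>L. L > 0 \<and> (\<forall>u\<in>X. \<forall>v\<in>X. dual_norm N (F u - F v) \<le> L * N (u - v)) \<longrightarrow>
          (\<exists>xs\<in>VI_sol X F. \<forall>k\<ge>1.
            (1 - L\<^sup>2 * (\<gamma> k)\<^sup>2 / \<alpha>\<^sup>2) * bregman \<omega> gw (x k) (y k)
            \<le> bregman \<omega> gw (x k) xs - bregman \<omega> gw (x (Suc k)) xs)"
  proof (intro allI impI)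
    fix L :: real
    assume H: "L > 0 \<and> (\<forall>u\<in>X. \<forall>v\<in>X. dual_norm N (F u - F v) \<le> L * N (u - v))"
    show "\<exists>xs\<in>VI_sol X F. \<forall>k\<ge>1.
            (1 - L\<^sup>2 * (\<gamma> k)\<^sup>2 / \<alpha>\<^sup>2) * bregman \<omega> gw (x k) (y k)
            \<le> bregman \<omega> gw (x k) xs - bregman \<omega> gw (x (Suc k)) xs"
    proof (intro bexI[OF _ xs] allI impI)
      fix k :: nat assume k: "k \<ge> 1"
      have hD: "dual_norm N (F (x k) - F (y k)) \<le> L * N (x k - y k)"
        using H xX[OF k] yX[OF k] by blast
      have "((\<gamma> k)\<^sup>2 / (2 * \<alpha>)) * (dual_norm N (F (x k) - F (y k)))^2
          \<le> L\<^sup>2 * (\<gamma> k)\<^sup>2 / \<alpha>\<^sup>2 * bregman \<omega> gw (x k) (y k)"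
        using lip_bound[OF a0 _ D0 m0 hD sv[OF k]] H by blast
      moreover have "(1 - L\<^sup>2 * (\<gamma> k)\<^sup>2 / \<alpha>\<^sup>2) * bregman \<omega> gw (x k) (y k)
          = bregman \<omega> gw (x k) (y k) - L\<^sup>2 * (\<gamma> k)\<^sup>2 / \<alpha>\<^sup>2 * bregman \<omega> gw (x k) (y k)"
        by (simp add: algebra_simps)
      ultimately show "(1 - L\<^sup>2 * (\<gamma> k)\<^sup>2 / \<alpha>\<^sup>2) * bregman \<omega> gw (x k) (y k)
            \<le> bregman \<omega> gw (x k) xs - bregman \<omega> gw (x (Suc k)) xs"
        using base[OF k] by linarith
    qed
  qed
  show ?thesis using PA PB PC by blast
qed

end
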